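(* Consider an exponential bottleneck game on a graph $G$, a Nash-routing $\mathbf{p}=[p_1,\dots,p_N]$ and a routing $\mathbf{p}^*=[p_1^*,\dots,p_N^*]$ of minimum social cost, and suppose $C^*=C(\mathbf{p}^* )=1$ and $L^*\ge2$. Let $\hat C=\lceil\max_i\log_2\widetilde C_i(\mathbf{p})\rceil$, $l_1^*=\log_2(L^*-1)$ and $k=\hat C-l_1^*-11$. Then every non-empty set of players $S\subseteq S^{(1)}\cup S^{(2)}\cup\dots\cup S^{(k)}$ is not self-sufficient in $\mathbf{p}$.
   Context: Player $\pi_i$ has a strategy set $\mathcal{P}_i$ of paths from $u_i$ to $v_i$; a routing is $\mathbf{p}=[p_1,\dots,p_N]$ with $p_i\in\mathcal{P}_i$. $C_e(\mathbf{p})$ is the number of paths in $\mathbf{p}$ using edge $e$; social cost $C(\mathbf{p})=\max_eC_e(\mathbf{p})$; player cost $\widetilde C_i(\mathbf{p})=\sum_{e\in p_i}2^{C_e(\mathbf{p})}$. A Nash-routing is one in which no player can strictly lower its cost by unilaterally switching to another path in its strategy set. $L^*$ is the maximum length of a path in $\mathbf{p}^*$. Stage $i$ ($1\le i\le\hat C$): $S^{(i)}$ is the set of players $\pi_j$ with $2^{\hat C-i}+2\le\widetilde C_j(\mathbf{p})\le 2^{\hat C-i+1}$. Self-sufficiency: for a set $S$ of players and $\pi_j\in S$, let $\mathbf{q}_j$ be the routing consisting only of the players in $S$, where every player of $S$ other than $\pi_j$ uses its path from $\mathbf{p}$ and $\pi_j$ uses $p_j^*$ (congestions in $\mathbf{q}_j$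 count only these paths). $S$ is self-sufficient in $\mathbf{p}$ if for every $\pi_j\in S$, $\sum_{e\in p_j^*}2^{C_e(\mathbf{q}_j)}\ge\widetilde C_j(\mathbf{p})$. *)

theory Defs
  imports Complex_Main
begin

(* An undirected graph is given by a finite set E of edges, each edge a 2-element vertex set.
   A path is a list of distinct vertices, consecutive vertices joined by an edge of E. *)

definition pedges :: "'v list \<Rightarrow> 'v set set" where
  "pedges xs = {{xs ! i, xs ! Suc i} | i. Suc i < length xs}"

definition plen :: "'v list \<Rightarrow> nat" where
  "plen xs = length xs - 1"

definition is_path :: "'v set set \<Rightarrow> 'v \<Rightarrow> 'v \<Rightarrow> 'v list \<Rightarrow> bool" where
  "is_path E u v xs \<longleftrightarrow> xs \<noteq> [] \<and> hd xs = u \<and> last xs = v \<and> distinct xs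
     \<and> (\<forall>i. Suc i < length xs \<longrightarrow> {xs ! i, xs ! Suc i} \<in> E)"

definition cong :: "(nat \<Rightarrow> 'v list) \<Rightarrow> nat set \<Rightarrow> 'v set \<Rightarrow> nat" where
  "cong r A e = card {i \<in> A. e \<in> pedges (r i)}"

definition social_cost :: "'v set set \<Rightarrow> nat \<Rightarrow> (nat \<Rightarrow> 'v list) \<Rightarrow> nat" where
  "social_cost E N r = Max (insert 0 ((\<lambda>e. cong r {..<N} e) ` E))"

definition player_cost :: "nat \<Rightarrow> (nat \<Rightarrow> 'v list) \<Rightarrow> nat \<Rightarrow> nat" where
  "player_cost N r i = (\<Sum>e\<in>pedges (r i). 2 ^ cong r {..<N} e)"

definition routing :: "nat \<Rightarrow> (nat \<Rightarrow> 'v list set) \<Rightarrow> (nat \<Rightarrow> 'v list) \<Rightarrow> bool" where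
  "routing N P r \<longleftrightarrow> (\<forall>i<N. r i \<in> P i)"

definition nash_routing :: "nat \<Rightarrow> (nat \<Rightarrow> 'v list set) \<Rightarrow> (nat \<Rightarrow> 'v list) \<Rightarrow> bool" where
  "nash_routing N P r \<longleftrightarrow> routing N P r \<and>
     (\<forall>i<N. \<forall>q\<in>P i. player_cost N r i \<le> player_cost N (r(i := q)) i)"

definition optimal_routing ::
  "'v set set \<Rightarrow> nat \<Rightarrow> (nat \<Rightarrow> 'v list set) \<Rightarrow> (nat \<Rightarrow> 'v list) \<Rightarrow> bool" where
  "optimal_routing E N P r \<longleftrightarrow> routing N P r \<and>
     (\<forall>r'. routing N P r' \<longrightarrow> social_cost E N r \<le> social_cost E N r')"

definition max_len :: "nat \<Rightarrow> (nat \<Rightarrow> 'v list) \<Rightarrow> nat" where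
  "max_len N r = Max ((\<lambda>i. plen (r i)) ` {..<N})"

definition C_hat :: "nat \<Rightarrow> (nat \<Rightarrow> 'v list) \<Rightarrow> int" where
  "C_hat N p = \<lceil>Max ((\<lambda>i. log 2 (real (player_cost N p i))) ` {..<N})\<rceil>"

definition stage :: "nat \<Rightarrow> (nat \<Rightarrow> 'v list) \<Rightarrow> nat \<Rightarrow> nat set" where
  "stage N p i = {j. j < N \<and> 1 \<le> int i \<and> int i \<le> C_hat N p \<and>
      2 ^ nat (C_hat N p - int i) + 2 \<le> player_cost N p j \<and>
      player_cost N p j \<le> 2 ^ nat (C_hat N p - int i + 1)}"

definition self_sufficient ::
  "nat \<Rightarrow> (nat \<Rightarrow> 'v list) \<Rightarrow> (nat \<Rightarrow> 'v list) \<Rightarrow> nat set \<Rightarrow> bool" where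
  "self_sufficient N p pstar S \<longleftrightarrow>
     (\<forall>j\<in>S. (\<Sum>e\<in>pedges (pstar j). (2::nat) ^ cong (p(j := pstar j)) S e) \<ge> player_cost N p j)"

end

theory Submission
  imports Defs
begin

lemma pedges_eq: "pedges xs = (\<lambda>i. {xs!i, xs!Suc i}) ` {..<length xs - 1}"
  unfolding pedges_def by auto

lemma finite_pedges[simp]: "finite (pedges xs)"
  by (simp add: pedges_eq)

lemma card_pedges: "card (pedges xs) \<le> plen xs"
  unfolding pedges_eq plen_def using card_image_le[of "{..<length xs - 1}"] by simp

lemma double_count:
  fixes f :: "'e \<Rightarrow> nat"
  assumes "finite S" "\<And>j. j \<in> S \<Longrightarrow> finite (A j)"
  shows "(\<Sum>j\<in>S. \<Sum>e\<in>A j. f e) = (\<Sum>e\<in>(\<Union>j\<in>S. A j). card {j\<in>S. e \<in> A j} * f e)"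
proof -
  let ?U = "\<Union>j\<in>S. A j"
  have fU: "finite ?U" using assms by auto
  have "(\<Sum>j\<in>S. \<Sum>e\<in>A j. f e) = (\<Sum>j\<in>S. \<Sum>e\<in>{e\<in>?U. e \<in> A j}. f e)"
    by (rule sum.cong) (auto intro: sum.cong)
  also have "\<dots> = (\<Sum>e\<in>?U. \<Sum>j\<in>{j\<in>S. e \<in> A j}. f e)"
    by (rule sum.swap_restrict[OF assms(1) fU])
  also have "\<dots> = (\<Sum>e\<in>?U. card {j\<in>S. e \<in> A j} * f e)" by simp
  finally show ?thesis .
qed

lemma edge_ineq: "9 * 2 ^ (c + 1) \<le> 2 * c * 2 ^ c + (4608::nat)"
proof (cases "c \<ge> 9")
  case True
  then have "18 * 2 ^ c \<le> 2 * c * (2::nat) ^ c" by (intro mult_right_mono) auto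
  moreover have "9 * 2 ^ (c + 1) = 18 * (2::nat) ^ c" by simp
  ultimately show ?thesis by linarith
next
  case False
  then have "(2::nat) ^ c \<le> 2 ^ 8" by (intro power_increasing) auto
  then show ?thesis by simp
qed

lemma pow_bound:
  fixes m :: nat and x :: int and l :: real
  assumes "m \<ge> 1" "log 2 (real m) + 11 \<le> real_of_int x"
  shows "2048 * m \<le> (2::nat) ^ nat x"
proof -
  have "real (2048 * m) = 2 powr (log 2 (real m) + 11)"
    using assms(1) by (simp add: powr_add)
  also have "\<dots> \<le> 2 powr (real (nat x))"
    using assms(2) by (intro powr_mono) auto
  also have "\<dots> = real ((2::nat) ^ nat x)" by (simp add: powr_realpow)
  finally show ?thesis by linarith
qed

theorem theorem2:
  fixes E :: "'v set set" and N :: nat and u v :: "nat \<Rightarrow> 'v"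
    and P :: "nat \<Rightarrow> 'v list set" and p pstar :: "nat \<Rightarrow> 'v list" and S :: "nat set"
  assumes "finite E" and "\<forall>e\<in>E. card e = 2"
    and "0 < N"
    and "\<forall>i<N. P i \<noteq> {} \<and> (\<forall>q\<in>P i. is_path E (u i) (v i) q)"
    and "nash_routing N P p"
    and "optimal_routing E N P pstar"
    and "social_cost E N pstar = 1"
    and "max_len N pstar \<ge> 2"
    and "S \<noteq> {}"
    and "S \<subseteq> (\<Union>i\<in>{i. 1 \<le> i \<and> real i \<le>
            real_of_int (C_hat N p) - log 2 (real (max_len N pstar - 1)) - 11}. stage N p i)"
  shows "\<not> self_sufficient N p pstar S"
proof
  assume ss: "self_sufficient N p pstar S"
  define L where "L = max_len N pstar"
  define s where "s = card S"
  define c where "c e = cong p S e" for e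
  define cost where "cost j = player_cost N p j" for j
  define U where "U = (\<Union>j\<in>S. pedges (p j))"
  define D where "D = (\<Union>j\<in>S. pedges (pstar j))"
  have SN: "S \<subseteq> {..<N}" using assms(10) by (auto simp: stage_def)
  have fS: "finite S" using SN finite_subset by blast
  have pst: "\<And>i. i<N \<Longrightarrow> pstar i \<in> P i" using assms(6) by (simp add: optimal_routing_def routing_def)
  have pedE: "pedges (pstar i) \<subseteq> E" if "i<N" for i
  proof -
    have "is_path E (u i) (v i) (pstar i)" using assms(4) pst that by blast
    then show ?thesis unfolding is_path_def pedges_def by auto
  qed
  have congle: "cong pstar {..<N} e \<le> 1" if "e \<in> E" for e
  proof -
    have "cong pstar {..<N} e \<le> social_cost E N pstar"
      unfolding social_cost_def using that assms(1) by (intro Max_ge) auto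
    then show ?thesis using assms(7) by simp
  qed
  have disj: "pedges (pstar i) \<inter> pedges (pstar j) = {}" if "i<N" "j<N" "i\<noteq>j" for i j
  proof (rule ccontr)
    assume "pedges (pstar i) \<inter> pedges (pstar j) \<noteq> {}"
    then obtain e where e: "e \<in> pedges (pstar i)" "e \<in> pedges (pstar j)" by blast
    then have eE: "e \<in> E" using pedE that by blast
    have "{i,j} \<subseteq> {k\<in>{..<N}. e \<in> pedges (pstar k)}" using e that by auto
    then have "card {i,j} \<le> cong pstar {..<N} e" unfolding cong_def by (intro card_mono) auto
    then show False using congle[OF eE] that by simp
  qed
  have cardD: "card (pedges (pstar j)) \<le> L" if "j<N" for j
  proof -
    have "plen (pstar j) \<le> L" unfolding L_def max_len_def using that by (intro Max_ge) auto
    then show ?thesis using card_pedges[of "pstar j"] by simp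
  qed
  have costlow: "2048*(L-1)+2 \<le> cost j" if jS: "j \<in> S" for j
  proof -
    obtain i where i: "1 \<le> i" "real i \<le> real_of_int (C_hat N p) - log 2 (real (L - 1)) - 11"
      "j \<in> stage N p i" using assms(10) jS unfolding L_def by blast
    have "2048*(L-1) \<le> (2::nat) ^ nat (C_hat N p - int i)"
      using i(2) assms(8) unfolding L_def by (intro pow_bound) auto
    moreover have "2 ^ nat (C_hat N p - int i) + 2 \<le> cost j"
      using i(3) unfolding stage_def cost_def by simp
    ultimately show ?thesis by linarith
  qed
  have ub: "cost j \<le> (\<Sum>e\<in>pedges (pstar j). 2^(c e + 1))" if "j \<in> S" for j
  proof -
    have "cost j \<le> (\<Sum>e\<in>pedges (pstar j). (2::nat) ^ cong (p(j := pstar j)) S e)"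
      using ss that unfolding self_sufficient_def cost_def by blast
    also have "\<dots> \<le> (\<Sum>e\<in>pedges (pstar j). 2^(c e + 1))"
    proof (rule sum_mono)
      fix e
      have "{i\<in>S. e \<in> pedges ((p(j := pstar j)) i)} \<subseteq> insert j {i\<in>S. e \<in> pedges (p i)}" by auto
      then have "cong (p(j := pstar j)) S e \<le> card (insert j {i\<in>S. e \<in> pedges (p i)})"
        unfolding cong_def using fS by (intro card_mono) auto
      also have "\<dots> \<le> c e + 1" unfolding c_def cong_def using fS by (simp add: card_insert_if)
      finally show "(2::nat) ^ cong (p(j := pstar j)) S e \<le> 2^(c e + 1)" by (intro power_increasing) auto
    qed
    finally show ?thesis .
  qed
  have lb: "(\<Sum>e\<in>U. c e * 2^(c e)) \<le> (\<Sum>j\<in>S. cost j)"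
  proof -
    have "(\<Sum>e\<in>U. c e * 2^(c e)) = (\<Sum>j\<in>S. \<Sum>e\<in>pedges (p j). (2::nat)^(c e))"
      unfolding U_def c_def using double_count[OF fS, of "\<lambda>j. pedges (p j)" "\<lambda>e. 2 ^ cong p S e"]
      by (simp add: cong_def)
    also have "\<dots> \<le> (\<Sum>j\<in>S. cost j)"
    proof (rule sum_mono)
      fix j assume "j \<in> S"
      show "(\<Sum>e\<in>pedges (p j). (2::nat)^(c e)) \<le> cost j"
        unfolding cost_def player_cost_def
      proof (rule sum_mono)
        fix e
        have "c e \<le> cong p {..<N} e" unfolding c_def cong_def using SN by (intro card_mono) auto
        then show "(2::nat)^(c e) \<le> 2 ^ cong p {..<N} e" by (intro power_increasing) auto
      qed
    qed
    finally show ?thesis .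
  qed
  have ub2: "(\<Sum>j\<in>S. cost j) \<le> (\<Sum>e\<in>D. 2^(c e + 1))"
  proof -
    have "(\<Sum>j\<in>S. cost j) \<le> (\<Sum>j\<in>S. \<Sum>e\<in>pedges (pstar j). 2^(c e + 1))"
      using ub by (intro sum_mono) auto
    also have "\<dots> = (\<Sum>e\<in>D. 2^(c e + 1))" unfolding D_def
      using fS SN disj by (intro sum.UNION_disjoint[symmetric]) auto
    finally show ?thesis .
  qed
  have fD: "finite D" unfolding D_def using fS by auto
  have fU: "finite U" unfolding U_def using fS by auto
  have e1: "9 * (\<Sum>e\<in>D. (2::nat)^(c e + 1)) \<le> 2 * (\<Sum>e\<in>D. c e * 2^(c e)) + 4608 * card D"
  proof -
    have "9 * (\<Sum>e\<in>D. (2::nat)^(c e + 1)) = (\<Sum>e\<in>D. 9 * 2^(c e + 1))" by (simp add: sum_distrib_left)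
    also have "\<dots> \<le> (\<Sum>e\<in>D. 2 * c e * 2^(c e) + 4608)" by (intro sum_mono edge_ineq)
    also have "\<dots> = 2 * (\<Sum>e\<in>D. c e * 2^(c e)) + 4608 * card D"
      by (simp add: sum.distrib sum_distrib_left mult.assoc)
    finally show ?thesis .
  qed
  have e2: "(\<Sum>e\<in>D. c e * (2::nat)^(c e)) \<le> (\<Sum>e\<in>U. c e * 2^(c e))"
  proof -
    have "(\<Sum>e\<in>D. c e * (2::nat)^(c e)) \<le> (\<Sum>e\<in>D \<union> U. c e * 2^(c e))"
      using fD fU by (intro sum_mono2) auto
    also have "\<dots> = (\<Sum>e\<in>U. c e * 2^(c e))"
    proof (rule sum.mono_neutral_right)
      show "\<forall>e\<in>D \<union> U - U. c e * (2::nat)^(c e) = 0"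
        proof
        fix e assume "e \<in> D \<union> U - U"
        then have "{i \<in> S. e \<in> pedges (p i)} = {}" unfolding U_def by auto
        then have "c e = 0" unfolding c_def cong_def by (metis card.empty)
        then show "c e * (2::nat)^(c e) = 0" by simp
      qed
    qed (use fD fU in auto)
    finally show ?thesis .
  qed
  have e3: "card D \<le> s * L"
  proof -
    have "card D \<le> (\<Sum>j\<in>S. card (pedges (pstar j)))" unfolding D_def by (rule card_UN_le[OF fS])
    also have "\<dots> \<le> (\<Sum>j\<in>S. L)" using cardD SN by (intro sum_mono) auto
    finally show ?thesis by (simp add: s_def)
  qed
  have e4: "s * (2048*(L-1)+2) \<le> (\<Sum>j\<in>S. cost j)"
    unfolding s_def using sum_bounded_below[of S "2048*(L-1)+2" cost] costlow by simp
  have s1: "s \<ge> 1" using fS assms(9) unfolding s_def by (simp add: Suc_leI card_gt_0_iff)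
  have L2: "L \<ge> 2" using assms(8) L_def by simp
  have a1: "s * L = s * (L-1) + s" proof -
    have "L = (L-1) + 1" using L2 by simp
    then show ?thesis by (metis add_mult_distrib2 mult_1_right)
  qed
  have a2: "s * 1 \<le> s * (L-1)" using L2 by (intro mult_le_mono) auto
  have a3: "s * (2048*(L-1)+2) = 2048 * (s * (L-1)) + 2 * s" by (simp add: algebra_simps)
  show False using e1 e2 e3 e4 lb ub2 a1 a2 a3 s1 by linarith
qed

end
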